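(* Let $R$ be a ring, $M$ a left $R$-module and $P$ a submodule of $M$. If $P$ is strongly irreducible in $M$ or $P$ is strongly hollow in $M$, then $\mathrm{Hom}_R(P/(P\cap Q),Q/(P\cap Q))=0$ for every submodule $Q$ of $M$.
   Context: $P$ is strongly irreducible in $M$ if for all submodules $K,L$ of $M$, $K\cap L\subseteq P$ implies $K\subseteq P$ or $L\subseteq P$. $P$ is strongly hollow in $M$ if for all submodules $K,L$ of $M$, $P\subseteq K+L$ implies $P\subseteq K$ or $P\subseteq L$. *)

theory Defs
  imports "HOL-Algebra.Module" "HOL-Algebra.AbelCoset"
begin

text \<open>Left modules over an arbitrary (not necessarily commutative) ring.
  The library locale module requires a commutative ring, so we state the
  same axioms relative to ring R.\<close>

definition left_module :: "('a, 'c) ring_scheme \<Rightarrow> ('a, 'b, 'd) module_scheme \<Rightarrow> bool" where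
  "left_module R M \<longleftrightarrow> ring R \<and> abelian_group M \<and>
     (\<forall>a\<in>carrier R. \<forall>x\<in>carrier M. a \<odot>\<^bsub>M\<^esub> x \<in> carrier M) \<and>
     (\<forall>a\<in>carrier R. \<forall>b\<in>carrier R. \<forall>x\<in>carrier M.
        (a \<oplus>\<^bsub>R\<^esub> b) \<odot>\<^bsub>M\<^esub> x = a \<odot>\<^bsub>M\<^esub> x \<oplus>\<^bsub>M\<^esub> b \<odot>\<^bsub>M\<^esub> x) \<and>
     (\<forall>a\<in>carrier R. \<forall>x\<in>carrier M. \<forall>y\<in>carrier M.
        a \<odot>\<^bsub>M\<^esub> (x \<oplus>\<^bsub>M\<^esub> y) = a \<odot>\<^bsub>M\<^esub> x \<oplus>\<^bsub>M\<^esub> a \<odot>\<^bsub>M\<^esub> y) \<and>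
     (\<forall>a\<in>carrier R. \<forall>b\<in>carrier R. \<forall>x\<in>carrier M.
        (a \<otimes>\<^bsub>R\<^esub> b) \<odot>\<^bsub>M\<^esub> x = a \<odot>\<^bsub>M\<^esub> (b \<odot>\<^bsub>M\<^esub> x)) \<and>
     (\<forall>x\<in>carrier M. \<one>\<^bsub>R\<^esub> \<odot>\<^bsub>M\<^esub> x = x)"

definition strongly_irreducible :: "('a, 'c) ring_scheme \<Rightarrow> ('a, 'b, 'd) module_scheme \<Rightarrow> 'b set \<Rightarrow> bool" where
  "strongly_irreducible R M P \<longleftrightarrow>
     (\<forall>K L. submodule K R M \<longrightarrow> submodule L R M \<longrightarrow> K \<inter> L \<subseteq> P \<longrightarrow> K \<subseteq> P \<or> L \<subseteq> P)"

definition strongly_hollow :: "('a, 'c) ring_scheme \<Rightarrow> ('a, 'b, 'd) module_scheme \<Rightarrow> 'b set \<Rightarrow> bool" where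
  "strongly_hollow R M P \<longleftrightarrow>
     (\<forall>K L. submodule K R M \<longrightarrow> submodule L R M \<longrightarrow> P \<subseteq> K <+>\<^bsub>M\<^esub> L \<longrightarrow> P \<subseteq> K \<or> P \<subseteq> L)"

text \<open>The quotient module M/N: carrier the additive cosets N +> x,
  addition of cosets, zero N, and scalar multiplication r(N+x) = N + r x
  (written as N <+> (r X), which is that coset). The ring fields mult/one
  of the record are irrelevant and left undefined.\<close>

definition quot_module :: "('a, 'b, 'd) module_scheme \<Rightarrow> 'b set \<Rightarrow> ('a, 'b set) module" where
  "quot_module M N = \<lparr>carrier = a_rcosets\<^bsub>M\<^esub> N, mult = undefined, one = undefined,
     zero = N, add = set_add M, smult = (\<lambda>r X. N <+>\<^bsub>M\<^esub> ((\<lambda>x. r \<odot>\<^bsub>M\<^esub> x) ` X))\<rparr>"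

definition lin_hom :: "('a, 'c) ring_scheme \<Rightarrow> ('a, 'b, 'd) module_scheme \<Rightarrow> ('a, 'e, 'f) module_scheme \<Rightarrow> ('b \<Rightarrow> 'e) set" where
  "lin_hom R A B = {f. f \<in> carrier A \<rightarrow> carrier B \<and>
     (\<forall>x\<in>carrier A. \<forall>y\<in>carrier A. f (x \<oplus>\<^bsub>A\<^esub> y) = f x \<oplus>\<^bsub>B\<^esub> f y) \<and>
     (\<forall>r\<in>carrier R. \<forall>x\<in>carrier A. f (r \<odot>\<^bsub>A\<^esub> x) = r \<odot>\<^bsub>B\<^esub> f x)}"

end

theory Submission imports Defs begin

lemma upd_coset: "a_r_coset (M\<lparr>carrier := P\<rparr>) = a_r_coset M"
  by (simp add: a_r_coset_def r_coset_def fun_eq_iff)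
lemma upd_setadd: "set_add (M\<lparr>carrier := P\<rparr>) = set_add M"
  by (simp add: set_add_def set_mult_def fun_eq_iff)
lemma upd_rcosets: "a_rcosets\<^bsub>M\<lparr>carrier := P\<rparr>\<^esub> N = {N +>\<^bsub>M\<^esub> p | p. p \<in> P}"
  by (auto simp add: A_RCOSETS_def RCOSETS_def a_r_coset_def r_coset_def)

lemma quot_simps:
  "carrier (quot_module (M\<lparr>carrier := P\<rparr>) N) = {N +>\<^bsub>M\<^esub> p | p. p \<in> P}"
  "add (quot_module (M\<lparr>carrier := P\<rparr>) N) = set_add M"
  "zero (quot_module (M\<lparr>carrier := P\<rparr>) N) = N"
  "smult (quot_module (M\<lparr>carrier := P\<rparr>) N) = (\<lambda>r X. N <+>\<^bsub>M\<^esub> ((\<lambda>x. r \<odot>\<^bsub>M\<^esub> x) ` X))"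
  by (simp_all add: quot_module_def upd_rcosets upd_setadd)

lemma lm_zero_smult:
  assumes LM: "left_module R M" and x: "x \<in> carrier M"
  shows "\<zero>\<^bsub>R\<^esub> \<odot>\<^bsub>M\<^esub> x = \<zero>\<^bsub>M\<^esub>"
proof -
  interpret abelian_group M using LM by (simp add: left_module_def)
  interpret R: ring R using LM by (simp add: left_module_def)
  have c: "\<zero>\<^bsub>R\<^esub> \<odot>\<^bsub>M\<^esub> x \<in> carrier M" using LM x by (simp add: left_module_def)
  have "\<zero>\<^bsub>R\<^esub> \<odot>\<^bsub>M\<^esub> x = (\<zero>\<^bsub>R\<^esub> \<oplus>\<^bsub>R\<^esub> \<zero>\<^bsub>R\<^esub>) \<odot>\<^bsub>M\<^esub> x" by simp
  also have "\<dots> = \<zero>\<^bsub>R\<^esub> \<odot>\<^bsub>M\<^esub> x \<oplus>\<^bsub>M\<^esub> \<zero>\<^bsub>R\<^esub> \<odot>\<^bsub>M\<^esub> x"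
    using LM x unfolding left_module_def by (meson R.zero_closed)
  finally have "\<zero>\<^bsub>R\<^esub> \<odot>\<^bsub>M\<^esub> x \<oplus>\<^bsub>M\<^esub> \<zero>\<^bsub>M\<^esub> = \<zero>\<^bsub>R\<^esub> \<odot>\<^bsub>M\<^esub> x \<oplus>\<^bsub>M\<^esub> \<zero>\<^bsub>R\<^esub> \<odot>\<^bsub>M\<^esub> x"
    using c by simp
  then show ?thesis using c by (metis add.l_cancel_one' zero_closed r_zero)
qed

lemma lm_neg_smult:
  assumes LM: "left_module R M" and x: "x \<in> carrier M"
  shows "(\<ominus>\<^bsub>R\<^esub> \<one>\<^bsub>R\<^esub>) \<odot>\<^bsub>M\<^esub> x = \<ominus>\<^bsub>M\<^esub> x"
proof -
  interpret abelian_group M using LM by (simp add: left_module_def)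
  interpret R: ring R using LM by (simp add: left_module_def)
  have c: "(\<ominus>\<^bsub>R\<^esub> \<one>\<^bsub>R\<^esub>) \<odot>\<^bsub>M\<^esub> x \<in> carrier M" using LM x by (simp add: left_module_def)
  have "\<zero>\<^bsub>M\<^esub> = \<zero>\<^bsub>R\<^esub> \<odot>\<^bsub>M\<^esub> x" using lm_zero_smult[OF LM x] by simp
  also have "\<dots> = (\<ominus>\<^bsub>R\<^esub> \<one>\<^bsub>R\<^esub> \<oplus>\<^bsub>R\<^esub> \<one>\<^bsub>R\<^esub>) \<odot>\<^bsub>M\<^esub> x" by (simp add: R.l_neg)
  also have "\<dots> = (\<ominus>\<^bsub>R\<^esub> \<one>\<^bsub>R\<^esub>) \<odot>\<^bsub>M\<^esub> x \<oplus>\<^bsub>M\<^esub> x"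
    using LM x unfolding left_module_def by (metis R.one_closed R.a_inv_closed)
  finally have "(\<ominus>\<^bsub>R\<^esub> \<one>\<^bsub>R\<^esub>) \<odot>\<^bsub>M\<^esub> x \<oplus>\<^bsub>M\<^esub> x = \<zero>\<^bsub>M\<^esub>" by simp
  then show ?thesis using c x by (metis minus_equality)
qed

lemma lm_smult_minus:
  assumes LM: "left_module R M" and r: "r \<in> carrier R" and x: "x \<in> carrier M" and y: "y \<in> carrier M"
  shows "r \<odot>\<^bsub>M\<^esub> (x \<ominus>\<^bsub>M\<^esub> y) = r \<odot>\<^bsub>M\<^esub> x \<ominus>\<^bsub>M\<^esub> r \<odot>\<^bsub>M\<^esub> y"
proof -
  interpret abelian_group M using LM by (simp add: left_module_def)
  have cl: "\<And>z. z \<in> carrier M \<Longrightarrow> r \<odot>\<^bsub>M\<^esub> z \<in> carrier M" using LM r by (simp add: left_module_def)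
  have "r \<odot>\<^bsub>M\<^esub> (x \<ominus>\<^bsub>M\<^esub> y) \<oplus>\<^bsub>M\<^esub> r \<odot>\<^bsub>M\<^esub> y = r \<odot>\<^bsub>M\<^esub> (x \<ominus>\<^bsub>M\<^esub> y \<oplus>\<^bsub>M\<^esub> y)"
    using LM r x y unfolding left_module_def by (metis minus_closed)
  also have "\<dots> = r \<odot>\<^bsub>M\<^esub> x" using x y by (simp add: a_minus_def a_assoc l_neg)
  finally show ?thesis using cl x y by (metis minus_closed add.inv_solve_right' a_minus_def)
qed

lemma sm_facts:
  assumes "submodule P R M"
  shows "P \<subseteq> carrier M" "\<zero>\<^bsub>M\<^esub> \<in> P"
    "\<And>x y. x \<in> P \<Longrightarrow> y \<in> P \<Longrightarrow> x \<oplus>\<^bsub>M\<^esub> y \<in> P"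
    "\<And>x. x \<in> P \<Longrightarrow> \<ominus>\<^bsub>M\<^esub> x \<in> P"
    "\<And>r x. r \<in> carrier R \<Longrightarrow> x \<in> P \<Longrightarrow> r \<odot>\<^bsub>M\<^esub> x \<in> P"
proof -
  interpret submodule P R M by fact
  show "P \<subseteq> carrier M" using subset by simp
  show "\<zero>\<^bsub>M\<^esub> \<in> P" using one_closed by simp
  show "\<And>x y. x \<in> P \<Longrightarrow> y \<in> P \<Longrightarrow> x \<oplus>\<^bsub>M\<^esub> y \<in> P" using m_closed by simp
  show "\<And>x. x \<in> P \<Longrightarrow> \<ominus>\<^bsub>M\<^esub> x \<in> P" using m_inv_closed by (simp add: a_inv_def)
  show "\<And>r x. r \<in> carrier R \<Longrightarrow> x \<in> P \<Longrightarrow> r \<odot>\<^bsub>M\<^esub> x \<in> P" by simp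
qed

lemma sm_intro:
  assumes "P \<subseteq> carrier M" "\<zero>\<^bsub>M\<^esub> \<in> P"
    "\<And>x y. x \<in> P \<Longrightarrow> y \<in> P \<Longrightarrow> x \<oplus>\<^bsub>M\<^esub> y \<in> P"
    "\<And>x. x \<in> P \<Longrightarrow> \<ominus>\<^bsub>M\<^esub> x \<in> P"
    "\<And>r x. r \<in> carrier R \<Longrightarrow> x \<in> P \<Longrightarrow> r \<odot>\<^bsub>M\<^esub> x \<in> P"
  shows "submodule P R M"
  unfolding submodule_def submodule_axioms_def
  using assms by (auto intro!: subgroup.intro simp: a_inv_def)

lemma sm_inter: "submodule P R M \<Longrightarrow> submodule Q R M \<Longrightarrow> submodule (P \<inter> Q) R M"
  apply (rule sm_intro)
  using sm_facts[of P R M] sm_facts[of Q R M] by auto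

context
  fixes R M N
  assumes LM: "left_module R M" and NS: "submodule N R M"
begin

interpretation abelian_group M using LM by (simp add: left_module_def)

lemma N_abs: "abelian_subgroup N M"
  apply (rule abelian_subgroupI3)
   apply (rule additive_subgroup.intro)
  using NS submodule.axioms(1) apply blast
  by unfold_locales

lemma cos_eq: "x \<in> carrier M \<Longrightarrow> y \<in> carrier M \<Longrightarrow> (N +>\<^bsub>M\<^esub> x = N +>\<^bsub>M\<^esub> y) \<longleftrightarrow> x \<ominus>\<^bsub>M\<^esub> y \<in> N"
proof
  assume x: "x \<in> carrier M" and y: "y \<in> carrier M"
  have Nc: "N \<subseteq> carrier M" using sm_facts[OF NS] by simp
  { assume "N +>\<^bsub>M\<^esub> x = N +>\<^bsub>M\<^esub> y"
    moreover have "x \<in> N +>\<^bsub>M\<^esub> x" using abelian_subgroup.a_rcos_self[OF N_abs x] .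
    ultimately obtain n where n: "n \<in> N" "x = n \<oplus>\<^bsub>M\<^esub> y" by (auto simp: a_r_coset_def')
    then have "x \<ominus>\<^bsub>M\<^esub> y = n" using Nc y by (simp add: a_minus_def a_assoc r_neg subsetD)
    with n show "x \<ominus>\<^bsub>M\<^esub> y \<in> N" by simp }
  { assume "x \<ominus>\<^bsub>M\<^esub> y \<in> N"
    then have "x \<in> N +>\<^bsub>M\<^esub> y" using x y
      by (auto simp: a_r_coset_def' a_minus_def a_assoc l_neg intro!: bexI[of _ "x \<oplus>\<^bsub>M\<^esub> \<ominus>\<^bsub>M\<^esub> y"])
    then show "N +>\<^bsub>M\<^esub> x = N +>\<^bsub>M\<^esub> y"
      using a_repr_independence[of x N y] y x NS sm_facts[OF NS] N_abs
      by (metis a_repr_independence abelian_subgroup.a_rcos_self additive_subgroup.a_subgroup abelian_subgroup_def) }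
qed

lemma cos_N: "x \<in> carrier M \<Longrightarrow> (N +>\<^bsub>M\<^esub> x = N) \<longleftrightarrow> x \<in> N"
proof -
  assume x: "x \<in> carrier M"
  have z: "\<ominus>\<^bsub>M\<^esub> \<zero>\<^bsub>M\<^esub> = \<zero>\<^bsub>M\<^esub>" by (metis minus_equality zero_closed l_zero)
  have "N +>\<^bsub>M\<^esub> \<zero>\<^bsub>M\<^esub> = N" using N_abs sm_facts[OF NS]
    by (simp add: a_coset_add_zero additive_subgroup.a_subgroup abelian_subgroup_def)
  then show ?thesis using cos_eq[of x "\<zero>\<^bsub>M\<^esub>"] x by (simp add: a_minus_def z)
qed

lemma cos_sum: "x \<in> carrier M \<Longrightarrow> y \<in> carrier M \<Longrightarrow> (N +>\<^bsub>M\<^esub> x) <+>\<^bsub>M\<^esub> (N +>\<^bsub>M\<^esub> y) = N +>\<^bsub>M\<^esub> (x \<oplus>\<^bsub>M\<^esub> y)"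
  using abelian_subgroup.a_rcos_sum[OF N_abs] .

lemma cos_smult:
  assumes r: "r \<in> carrier R" and p: "p \<in> carrier M"
  shows "N <+>\<^bsub>M\<^esub> ((\<lambda>x. r \<odot>\<^bsub>M\<^esub> x) ` (N +>\<^bsub>M\<^esub> p)) = N +>\<^bsub>M\<^esub> (r \<odot>\<^bsub>M\<^esub> p)"
proof -
  note F = sm_facts[OF NS]
  have cl: "\<And>z. z \<in> carrier M \<Longrightarrow> r \<odot>\<^bsub>M\<^esub> z \<in> carrier M" using LM r by (simp add: left_module_def)
  have dist: "\<And>x y. x \<in> carrier M \<Longrightarrow> y \<in> carrier M \<Longrightarrow> r \<odot>\<^bsub>M\<^esub> (x \<oplus>\<^bsub>M\<^esub> y) = r \<odot>\<^bsub>M\<^esub> x \<oplus>\<^bsub>M\<^esub> r \<odot>\<^bsub>M\<^esub> y"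
    using LM r by (simp add: left_module_def)
  show ?thesis
  proof (rule equalityI; rule subsetI)
    fix z assume "z \<in> N <+>\<^bsub>M\<^esub> ((\<lambda>x. r \<odot>\<^bsub>M\<^esub> x) ` (N +>\<^bsub>M\<^esub> p))"
    then obtain n m where nm: "n \<in> N" "m \<in> N" "z = n \<oplus>\<^bsub>M\<^esub> r \<odot>\<^bsub>M\<^esub> (m \<oplus>\<^bsub>M\<^esub> p)"
      by (auto simp: set_add_def' a_r_coset_def')
    then have "z = (n \<oplus>\<^bsub>M\<^esub> r \<odot>\<^bsub>M\<^esub> m) \<oplus>\<^bsub>M\<^esub> r \<odot>\<^bsub>M\<^esub> p"
      using dist F(1) p cl by (simp add: a_assoc subsetD)
    moreover have "n \<oplus>\<^bsub>M\<^esub> r \<odot>\<^bsub>M\<^esub> m \<in> N" using F nm r by simp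
    ultimately show "z \<in> N +>\<^bsub>M\<^esub> (r \<odot>\<^bsub>M\<^esub> p)" by (auto simp: a_r_coset_def')
  next
    fix z assume "z \<in> N +>\<^bsub>M\<^esub> (r \<odot>\<^bsub>M\<^esub> p)"
    then obtain n where n: "n \<in> N" "z = n \<oplus>\<^bsub>M\<^esub> r \<odot>\<^bsub>M\<^esub> p" by (auto simp: a_r_coset_def')
    have "p \<in> N +>\<^bsub>M\<^esub> p" using F p by (auto simp: a_r_coset_def' intro!: bexI[of _ "\<zero>\<^bsub>M\<^esub>"])
    with n show "z \<in> N <+>\<^bsub>M\<^esub> ((\<lambda>x. r \<odot>\<^bsub>M\<^esub> x) ` (N +>\<^bsub>M\<^esub> p))"
      by (auto simp: set_add_def')
  qed
qed

end


theorem lemma2p11: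
  fixes R :: "('a, 'c) ring_scheme" and M :: "('a, 'b, 'd) module_scheme"
  assumes "left_module R M"
    and "submodule P R M"
    and "strongly_irreducible R M P \<or> strongly_hollow R M P"
  shows "\<forall>Q. submodule Q R M \<longrightarrow>
     (\<forall>f \<in> lin_hom R (quot_module (M\<lparr>carrier := P\<rparr>) (P \<inter> Q))
                      (quot_module (M\<lparr>carrier := Q\<rparr>) (P \<inter> Q)).
        \<forall>X \<in> carrier (quot_module (M\<lparr>carrier := P\<rparr>) (P \<inter> Q)).
          f X = \<zero>\<^bsub>quot_module (M\<lparr>carrier := Q\<rparr>) (P \<inter> Q)\<^esub>)"
proof (intro allI impI ballI)
  fix Q f X
  assume QS: "submodule Q R M"
    and f: "f \<in> lin_hom R (quot_module (M\<lparr>carrier := P\<rparr>) (P \<inter> Q)) (quot_module (M\<lparr>carrier := Q\<rparr>) (P \<inter> Q))"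
    and X: "X \<in> carrier (quot_module (M\<lparr>carrier := P\<rparr>) (P \<inter> Q))"
  note LM = assms(1)
  interpret abelian_group M using LM by (simp add: left_module_def)
  interpret R: ring R using LM by (simp add: left_module_def)
  define N where "N = P \<inter> Q"
  have NS: "submodule N R M" unfolding N_def using sm_inter assms(2) QS .
  note FP = sm_facts[OF assms(2)] and FQ = sm_facts[OF QS] and FN = sm_facts[OF NS]
  have cl: "\<And>r z. r \<in> carrier R \<Longrightarrow> z \<in> carrier M \<Longrightarrow> r \<odot>\<^bsub>M\<^esub> z \<in> carrier M"
    using LM by (simp add: left_module_def)
  define CP where "CP = {N +>\<^bsub>M\<^esub> p | p. p \<in> P}"
  define CQ where "CQ = {N +>\<^bsub>M\<^esub> q | q. q \<in> Q}"
  have fl: "f \<in> CP \<rightarrow> CQ"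
    "\<forall>x\<in>CP. \<forall>y\<in>CP. f (x <+>\<^bsub>M\<^esub> y) = f x <+>\<^bsub>M\<^esub> f y"
    "\<forall>r\<in>carrier R. \<forall>x\<in>CP. f (N <+>\<^bsub>M\<^esub> ((\<lambda>x. r \<odot>\<^bsub>M\<^esub> x) ` x)) = N <+>\<^bsub>M\<^esub> ((\<lambda>x. r \<odot>\<^bsub>M\<^esub> x) ` f x)"
    using f unfolding lin_hom_def quot_simps CP_def CQ_def N_def by simp_all
  have inCP: "\<And>p. p \<in> P \<Longrightarrow> N +>\<^bsub>M\<^esub> p \<in> CP" unfolding CP_def by blast
  have fmap: "\<And>p. p \<in> P \<Longrightarrow> \<exists>q\<in>Q. f (N +>\<^bsub>M\<^esub> p) = N +>\<^bsub>M\<^esub> q"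
  proof -
    fix p assume p: "p \<in> P"
    have "f (N +>\<^bsub>M\<^esub> p) \<in> CQ" using fl(1) inCP[OF p] by (rule funcset_mem)
    then show "\<exists>q\<in>Q. f (N +>\<^bsub>M\<^esub> p) = N +>\<^bsub>M\<^esub> q" unfolding CQ_def by blast
  qed
  have fadd: "\<And>p1 p2 q1 q2. p1 \<in> P \<Longrightarrow> p2 \<in> P \<Longrightarrow> q1 \<in> Q \<Longrightarrow> q2 \<in> Q \<Longrightarrow>
      f (N +>\<^bsub>M\<^esub> p1) = N +>\<^bsub>M\<^esub> q1 \<Longrightarrow> f (N +>\<^bsub>M\<^esub> p2) = N +>\<^bsub>M\<^esub> q2 \<Longrightarrow>
      f (N +>\<^bsub>M\<^esub> (p1 \<oplus>\<^bsub>M\<^esub> p2)) = N +>\<^bsub>M\<^esub> (q1 \<oplus>\<^bsub>M\<^esub> q2)"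
  proof -
    fix p1 p2 q1 q2 assume a: "p1 \<in> P" "p2 \<in> P" "q1 \<in> Q" "q2 \<in> Q"
      "f (N +>\<^bsub>M\<^esub> p1) = N +>\<^bsub>M\<^esub> q1" "f (N +>\<^bsub>M\<^esub> p2) = N +>\<^bsub>M\<^esub> q2"
    have c: "p1 \<in> carrier M" "p2 \<in> carrier M" "q1 \<in> carrier M" "q2 \<in> carrier M"
      using a FP(1) FQ(1) by auto
    have "f (N +>\<^bsub>M\<^esub> (p1 \<oplus>\<^bsub>M\<^esub> p2)) = f ((N +>\<^bsub>M\<^esub> p1) <+>\<^bsub>M\<^esub> (N +>\<^bsub>M\<^esub> p2))"
      using cos_sum[OF LM NS c(1,2)] by simp
    also have "\<dots> = f (N +>\<^bsub>M\<^esub> p1) <+>\<^bsub>M\<^esub> f (N +>\<^bsub>M\<^esub> p2)"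
      using fl(2) inCP a(1,2) by blast
    also have "\<dots> = N +>\<^bsub>M\<^esub> (q1 \<oplus>\<^bsub>M\<^esub> q2)" using a(5,6) cos_sum[OF LM NS c(3,4)] by simp
    finally show "f (N +>\<^bsub>M\<^esub> (p1 \<oplus>\<^bsub>M\<^esub> p2)) = N +>\<^bsub>M\<^esub> (q1 \<oplus>\<^bsub>M\<^esub> q2)" .
  qed
  have fsm: "\<And>r p q. r \<in> carrier R \<Longrightarrow> p \<in> P \<Longrightarrow> q \<in> Q \<Longrightarrow>
      f (N +>\<^bsub>M\<^esub> p) = N +>\<^bsub>M\<^esub> q \<Longrightarrow> f (N +>\<^bsub>M\<^esub> (r \<odot>\<^bsub>M\<^esub> p)) = N +>\<^bsub>M\<^esub> (r \<odot>\<^bsub>M\<^esub> q)"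
  proof -
    fix r p q assume a: "r \<in> carrier R" "p \<in> P" "q \<in> Q" "f (N +>\<^bsub>M\<^esub> p) = N +>\<^bsub>M\<^esub> q"
    have c: "p \<in> carrier M" "q \<in> carrier M" using a FP(1) FQ(1) by auto
    have "f (N +>\<^bsub>M\<^esub> (r \<odot>\<^bsub>M\<^esub> p)) = f (N <+>\<^bsub>M\<^esub> ((\<lambda>x. r \<odot>\<^bsub>M\<^esub> x) ` (N +>\<^bsub>M\<^esub> p)))"
      using cos_smult[OF LM NS a(1) c(1)] by simp
    also have "\<dots> = N <+>\<^bsub>M\<^esub> ((\<lambda>x. r \<odot>\<^bsub>M\<^esub> x) ` f (N +>\<^bsub>M\<^esub> p))"
      using fl(3) inCP a(1,2) by blast
    also have "\<dots> = N +>\<^bsub>M\<^esub> (r \<odot>\<^bsub>M\<^esub> q)" using a(4) cos_smult[OF LM NS a(1) c(2)] by simp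
    finally show "f (N +>\<^bsub>M\<^esub> (r \<odot>\<^bsub>M\<^esub> p)) = N +>\<^bsub>M\<^esub> (r \<odot>\<^bsub>M\<^esub> q)" .
  qed
  have f0: "f (N +>\<^bsub>M\<^esub> \<zero>\<^bsub>M\<^esub>) = N +>\<^bsub>M\<^esub> \<zero>\<^bsub>M\<^esub>"
  proof -
    obtain q where q: "q \<in> Q" "f (N +>\<^bsub>M\<^esub> \<zero>\<^bsub>M\<^esub>) = N +>\<^bsub>M\<^esub> q" using fmap FP(2) by blast
    have "f (N +>\<^bsub>M\<^esub> (\<zero>\<^bsub>R\<^esub> \<odot>\<^bsub>M\<^esub> \<zero>\<^bsub>M\<^esub>)) = N +>\<^bsub>M\<^esub> (\<zero>\<^bsub>R\<^esub> \<odot>\<^bsub>M\<^esub> q)"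
      using fsm q FP(2) by simp
    then show ?thesis using lm_zero_smult[OF LM] q FQ(1) by (metis zero_closed subsetD)
  qed
  define K where "K = {p \<ominus>\<^bsub>M\<^esub> q | p q. p \<in> P \<and> q \<in> Q \<and> f (N +>\<^bsub>M\<^esub> p) = N +>\<^bsub>M\<^esub> q}"
  have inK: "\<And>p q. p \<in> P \<Longrightarrow> q \<in> Q \<Longrightarrow> f (N +>\<^bsub>M\<^esub> p) = N +>\<^bsub>M\<^esub> q \<Longrightarrow> p \<ominus>\<^bsub>M\<^esub> q \<in> K"
    unfolding K_def by blast
  have KS: "submodule K R M"
  proof (rule sm_intro)
    show "K \<subseteq> carrier M" unfolding K_def using FP(1) FQ(1) by auto
    have "\<zero>\<^bsub>M\<^esub> \<ominus>\<^bsub>M\<^esub> \<zero>\<^bsub>M\<^esub> \<in> K" using inK[OF FP(2) FQ(2) f0] .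
    then show "\<zero>\<^bsub>M\<^esub> \<in> K" by (simp add: a_minus_def r_neg)
  next
    fix r x assume r: "r \<in> carrier R" and "x \<in> K"
    then obtain p q where pq: "p \<in> P" "q \<in> Q" "f (N +>\<^bsub>M\<^esub> p) = N +>\<^bsub>M\<^esub> q" "x = p \<ominus>\<^bsub>M\<^esub> q"
      unfolding K_def by blast
    have "r \<odot>\<^bsub>M\<^esub> x = r \<odot>\<^bsub>M\<^esub> p \<ominus>\<^bsub>M\<^esub> r \<odot>\<^bsub>M\<^esub> q"
      using lm_smult_minus[OF LM r] pq FP(1) FQ(1) by blast
    then show "r \<odot>\<^bsub>M\<^esub> x \<in> K" using inK[OF FP(5)[OF r pq(1)] FQ(5)[OF r pq(2)] fsm[OF r pq(1-3)]] by simp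
  next
    fix x assume "x \<in> K"
    then obtain p q where pq: "p \<in> P" "q \<in> Q" "f (N +>\<^bsub>M\<^esub> p) = N +>\<^bsub>M\<^esub> q" "x = p \<ominus>\<^bsub>M\<^esub> q"
      unfolding K_def by blast
    have xc: "x \<in> carrier M" using pq FP(1) FQ(1) by auto
    have "(\<ominus>\<^bsub>R\<^esub> \<one>\<^bsub>R\<^esub>) \<odot>\<^bsub>M\<^esub> x = (\<ominus>\<^bsub>R\<^esub> \<one>\<^bsub>R\<^esub>) \<odot>\<^bsub>M\<^esub> p \<ominus>\<^bsub>M\<^esub> (\<ominus>\<^bsub>R\<^esub> \<one>\<^bsub>R\<^esub>) \<odot>\<^bsub>M\<^esub> q"
      using lm_smult_minus[OF LM] pq FP(1) FQ(1) by blast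
    moreover have "\<ominus>\<^bsub>R\<^esub> \<one>\<^bsub>R\<^esub> \<in> carrier R" by simp
    ultimately show "\<ominus>\<^bsub>M\<^esub> x \<in> K"
      using inK[OF FP(5)[OF _ pq(1)] FQ(5)[OF _ pq(2)] fsm[OF _ pq(1-3)]] lm_neg_smult[OF LM xc] by metis
  next
    fix x y assume "x \<in> K" "y \<in> K"
    then obtain p q p' q' where pq: "p \<in> P" "q \<in> Q" "f (N +>\<^bsub>M\<^esub> p) = N +>\<^bsub>M\<^esub> q" "x = p \<ominus>\<^bsub>M\<^esub> q"
      and pq': "p' \<in> P" "q' \<in> Q" "f (N +>\<^bsub>M\<^esub> p') = N +>\<^bsub>M\<^esub> q'" "y = p' \<ominus>\<^bsub>M\<^esub> q'"
      unfolding K_def by blast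
    have c: "p \<in> carrier M" "q \<in> carrier M" "p' \<in> carrier M" "q' \<in> carrier M" using pq pq' FP(1) FQ(1) by auto
    have "x \<oplus>\<^bsub>M\<^esub> y = (p \<oplus>\<^bsub>M\<^esub> p') \<ominus>\<^bsub>M\<^esub> (q \<oplus>\<^bsub>M\<^esub> q')"
      using c pq(4) pq'(4) by (simp add: a_minus_def minus_add a_ac)
    then show "x \<oplus>\<^bsub>M\<^esub> y \<in> K"
      using inK[OF FP(3)[OF pq(1) pq'(1)] FQ(3)[OF pq(2) pq'(2)] fadd[OF pq(1) pq'(1) pq(2) pq'(2) pq(3) pq'(3)]] by simp
  qed
  obtain p where p: "p \<in> P" "X = N +>\<^bsub>M\<^esub> p" using X unfolding quot_simps N_def by blast
  obtain q where q: "q \<in> Q" "f (N +>\<^bsub>M\<^esub> p) = N +>\<^bsub>M\<^esub> q" using fmap p(1) by blast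
  have pc: "p \<in> carrier M" and qc: "q \<in> carrier M" using p q FP(1) FQ(1) by auto
  have pqK: "p \<ominus>\<^bsub>M\<^esub> q \<in> K" using inK p q by blast
  have goal: "f X = N" if "q \<in> P"
  proof -
    have "q \<in> N" using that q unfolding N_def by simp
    then show ?thesis using p q cos_N[OF LM NS qc] by simp
  qed
  have qform: "q = p \<ominus>\<^bsub>M\<^esub> (p \<ominus>\<^bsub>M\<^esub> q)" using pc qc
    by (simp add: a_minus_def minus_add minus_minus a_assoc[symmetric] r_neg l_zero)
  have z0: "\<zero>\<^bsub>quot_module (M\<lparr>carrier := Q\<rparr>) (P \<inter> Q)\<^esub> = N" by (simp add: quot_module_def N_def)
  have "f X = N"
    using assms(3)
  proof
    assume "strongly_irreducible R M P"
    moreover have "K \<inter> Q \<subseteq> P"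
    proof
      fix x assume "x \<in> K \<inter> Q"
      then obtain p' q' where pq: "p' \<in> P" "q' \<in> Q" "f (N +>\<^bsub>M\<^esub> p') = N +>\<^bsub>M\<^esub> q'" "x = p' \<ominus>\<^bsub>M\<^esub> q'" "x \<in> Q"
        unfolding K_def by blast
      have c: "p' \<in> carrier M" "q' \<in> carrier M" using pq FP(1) FQ(1) by auto
      have "p' = x \<oplus>\<^bsub>M\<^esub> q'" using c pq(4) by (simp add: a_minus_def a_assoc l_neg)
      then have "p' \<in> Q" using FQ(3)[OF pq(5) pq(2)] by simp
      then have "p' \<in> N" using pq unfolding N_def by simp
      then have "N +>\<^bsub>M\<^esub> q' = N" using pq(3) cos_N[OF LM NS] c f0 FN
        by (metis a_coset_add_zero N_abs[OF LM NS] abelian_subgroup_def additive_subgroup.a_subgroup)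
      then have "q' \<in> N" using cos_N[OF LM NS c(2)] by simp
      then have "x \<in> N" using pq FN c \<open>p' \<in> N\<close> by (simp add: a_minus_def)
      then show "x \<in> P" unfolding N_def by simp
    qed
    ultimately have "K \<subseteq> P \<or> Q \<subseteq> P" unfolding strongly_irreducible_def using KS QS by blast
    then show ?thesis
    proof
      assume "K \<subseteq> P"
      then have "p \<ominus>\<^bsub>M\<^esub> q \<in> P" using pqK by blast
      then have "p \<oplus>\<^bsub>M\<^esub> \<ominus>\<^bsub>M\<^esub> (p \<ominus>\<^bsub>M\<^esub> q) \<in> P" using FP(3)[OF p(1) FP(4)] by blast
      then have "q \<in> P" using qform by (simp add: a_minus_def)
      then show ?thesis using goal by simp
    next
      assume "Q \<subseteq> P" then show ?thesis using goal q by blast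
    qed
  next
    assume "strongly_hollow R M P"
    moreover have "P \<subseteq> K <+>\<^bsub>M\<^esub> Q"
    proof
      fix x assume x: "x \<in> P"
      obtain y where y: "y \<in> Q" "f (N +>\<^bsub>M\<^esub> x) = N +>\<^bsub>M\<^esub> y" using fmap x by blast
      have c: "x \<in> carrier M" "y \<in> carrier M" using x y FP(1) FQ(1) by auto
      have "x = (x \<ominus>\<^bsub>M\<^esub> y) \<oplus>\<^bsub>M\<^esub> y" using c by (simp add: a_minus_def a_assoc l_neg)
      moreover have "x \<ominus>\<^bsub>M\<^esub> y \<in> K" using inK x y by blast
      ultimately show "x \<in> K <+>\<^bsub>M\<^esub> Q" using y by (auto simp: set_add_def')
    qed
    ultimately have "P \<subseteq> K \<or> P \<subseteq> Q" unfolding strongly_hollow_def using KS QS by blast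
    then show ?thesis
    proof
      assume "P \<subseteq> Q"
      then have "N = P" unfolding N_def by blast
      then have "X = N +>\<^bsub>M\<^esub> \<zero>\<^bsub>M\<^esub>" using p cos_N[OF LM NS pc] FN
        by (metis a_coset_add_zero N_abs[OF LM NS] abelian_subgroup_def additive_subgroup.a_subgroup)
      then show ?thesis using f0 FN
        by (metis a_coset_add_zero N_abs[OF LM NS] abelian_subgroup_def additive_subgroup.a_subgroup)
    next
      assume "P \<subseteq> K"
      then have "p \<in> K" using p by blast
      then obtain p' q' where pq: "p' \<in> P" "q' \<in> Q" "f (N +>\<^bsub>M\<^esub> p') = N +>\<^bsub>M\<^esub> q'" "p = p' \<ominus>\<^bsub>M\<^esub> q'"
        unfolding K_def by blast
      have c: "p' \<in> carrier M" "q' \<in> carrier M" using pq FP(1) FQ(1) by auto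
      have "q' = p' \<ominus>\<^bsub>M\<^esub> p" using c pq(4)
        by (simp add: a_minus_def minus_add minus_minus a_assoc[symmetric] r_neg l_zero)
      moreover have "p' \<oplus>\<^bsub>M\<^esub> \<ominus>\<^bsub>M\<^esub> p \<in> P" using FP(3)[OF pq(1) FP(4)[OF p(1)]] .
      ultimately have "q' \<in> P" by (simp add: a_minus_def)
      then have qN: "q' \<in> N" using pq unfolding N_def by simp
      have "N +>\<^bsub>M\<^esub> p = N +>\<^bsub>M\<^esub> p'" using cos_eq[OF LM NS pc c(1)] pq(4) c qN FN
        by (simp add: a_minus_def minus_add minus_minus a_assoc[symmetric] r_neg l_zero l_neg a_comm)
      then show ?thesis using p pq(3) cos_N[OF LM NS c(2)] qN by simp
    qed
  qed
  then show "f X = \<zero>\<^bsub>quot_module (M\<lparr>carrier := Q\<rparr>) (P \<inter> Q)\<^esub>" using z0 by simp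
qed

end
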